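(* Let $K$ be a field, let $L\in K^{n\times n}[s]$, $L_1\in K^{n_1\times n_1}[s]$ be nonsingular polynomial matrices, let $\Theta,\Theta_1\in K^{n_1\times n}_\infty(s)$ satisfy $\Theta L=L_1\Theta_1$, and let $\phi:U^L\to U^{L_1}$ be the $K_\infty(s)$-module homomorphism given by $\phi(\rho^Lx)=\rho^{L_1}(\Theta x)$, $x\in K^n_\infty(s)$. Then: (i) $\phi$ is surjective if and only if there exist proper rational matrices $C\in K^{n\times n_1}_\infty(s)$, $D\in K^{n_1\times n_1}_\infty(s)$ with $\Theta C+s^{-1}L_1D=I_{n_1}$; (ii) $\phi$ is injective if and only if there exist proper rational matrices $C\in K^{n_1\times n}_\infty(s)$, $D\in K^{n\times n}_\infty(s)$ with $C\Theta_1+D\,s^{-1}L=I_n$ (equivalently, $\Theta_1^TC^T+s^{-1}L^TD^T=I_n$).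
   Context: $K(s)$ denotes the field of rational functions over $K$. A rational function $f$ is proper if $f=0$ or $f=p/q$ with $p,q\in K[s]$, $q\ne0$, $\deg p\le\deg q$; $K_\infty(s)$ is the ring of proper rational functions, and $K^n_\infty(s)$, $K^{m\times r}_\infty(s)$ denote vectors/matrices with proper rational entries. One has $K(s)=K[s]\oplus s^{-1}K_\infty(s)$; $\pi_+:K(s)\to K[s]$ denotes the projection onto the polynomial part along $s^{-1}K_\infty(s)$, extended entrywise to vectors and matrices. For a nonsingular $M\in K^{m\times m}[s]$, define $\rho^M:K^m_\infty(s)\to K^m[s]$ by $\rho^M x=M\,\pi_+(M^{-1}x)$ and $U^M=\operatorname{Im}\rho^M$, a $K_\infty(s)$-module via $q\cdot\rho^Mx=\rho^M(qx)$ (well defined since $\operatorname{Ker}\rho^M=K^m_\infty(s)\cap s^{-1}MK^m_\infty(s)$). *)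

theory Defs
  imports "HOL-Computational_Algebra.Fraction_Field" "HOL-Computational_Algebra.Polynomial"
    "Jordan_Normal_Form.Determinant"
begin

type_synonym 'a ratf = "'a poly fract"

definition proper :: "'a::field ratf \<Rightarrow> bool" where
  "proper f \<longleftrightarrow> f = 0 \<or> (\<exists>p q. q \<noteq> 0 \<and> degree p \<le> degree q \<and> f = Fract p q)"

definition s_ratf :: "'a::field ratf" where
  "s_ratf = to_fract [:0, 1:]"

text \<open>Polynomial part: pi_+ f is the unique polynomial g with f - g in s^{-1} K_infty(s).\<close>
definition pi_plus :: "'a::field ratf \<Rightarrow> 'a ratf" where
  "pi_plus f = to_fract (THE g. \<exists>h. proper h \<and> f = to_fract g + inverse s_ratf * h)"

definition proper_vec :: "'a::field ratf vec \<Rightarrow> bool" where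
  "proper_vec x \<longleftrightarrow> (\<forall>i < dim_vec x. proper (x $ i))"

definition proper_mat :: "'a::field ratf mat \<Rightarrow> bool" where
  "proper_mat A \<longleftrightarrow> (\<forall>i < dim_row A. \<forall>j < dim_col A. proper (A $$ (i, j)))"

definition ratm :: "'a::field poly mat \<Rightarrow> 'a ratf mat" where
  "ratm M = map_mat to_fract M"

text \<open>rho^M x = M pi_+(M^{-1} x), for nonsingular M of size m.\<close>
definition rho :: "'a::field poly mat \<Rightarrow> 'a ratf vec \<Rightarrow> 'a ratf vec" where
  "rho M x = ratm M *\<^sub>v map_vec pi_plus
     (THE y. y \<in> carrier_vec (dim_col M) \<and> ratm M *\<^sub>v y = x)"

definition U_mod :: "'a::field poly mat \<Rightarrow> 'a ratf vec set" where
  "U_mod M = rho M ` {x \<in> carrier_vec (dim_row M). proper_vec x}"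

definition phi_hom :: "'a::field poly mat \<Rightarrow> 'a poly mat \<Rightarrow> 'a ratf mat \<Rightarrow> 'a ratf vec \<Rightarrow> 'a ratf vec" where
  "phi_hom L L1 \<Theta> u = rho L1 (\<Theta> *\<^sub>v
     (SOME x. x \<in> carrier_vec (dim_row L) \<and> proper_vec x \<and> rho L x = u))"

end

theory Submission
  imports Defs
begin

definition dg :: "'a::field ratf \<Rightarrow> int" where
 "dg f = (SOME d. \<exists>p q. p \<noteq> 0 \<and> q \<noteq> 0 \<and> f = Fract p q \<and> d = int (degree p) - int (degree q))"

lemma Fract_eq0_iff: "q \<noteq> 0 \<Longrightarrow> Fract p q = 0 \<longleftrightarrow> p = 0"
  by (simp add: Zero_fract_def eq_fract)

lemma dg_Fract:
  fixes p q :: "'a::field poly"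
  assumes "p \<noteq> 0" "q \<noteq> 0"
  shows "dg (Fract p q) = int (degree p) - int (degree q)"
proof -
  have ex: "\<exists>p' q'. p' \<noteq> 0 \<and> q' \<noteq> 0 \<and> Fract p q = Fract p' q' \<and>
     int (degree p) - int (degree q) = int (degree p') - int (degree q')"
    using assms by blast
  have "\<And>d. (\<exists>p' q'. p' \<noteq> 0 \<and> q' \<noteq> 0 \<and> Fract p q = Fract p' q' \<and> d = int (degree p') - int (degree q'))
     \<Longrightarrow> d = int (degree p) - int (degree q)"
  proof -
    fix d assume "\<exists>p' q'. p' \<noteq> 0 \<and> q' \<noteq> 0 \<and> Fract p q = Fract p' q' \<and> d = int (degree p') - int (degree q')"
    then obtain p' q' where h: "p' \<noteq> 0" "q' \<noteq> 0" "Fract p q = Fract p' q'" "d = int (degree p') - int (degree q')"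
      by blast
    from h(3) assms h have "p * q' = p' * q" by (simp add: eq_fract)
    hence "degree (p * q') = degree (p' * q)" by simp
    hence "degree p + degree q' = degree p' + degree q"
      using assms h by (simp add: degree_mult_eq)
    thus "d = int (degree p) - int (degree q)" using h by simp
  qed
  note * = this
  show ?thesis unfolding dg_def
    apply (rule some_equality)
    using assms apply blast
    using * by blast
qed

lemma dg_nonzero_rep:
  assumes "f \<noteq> 0"
  obtains p q where "p \<noteq> 0" "q \<noteq> 0" "f = Fract p q" "dg f = int (degree p) - int (degree q)"
proof -
  from Fract_cases_nonzero[of f] assms obtain p q where "f = Fract p q" "q \<noteq> 0" "p \<noteq> 0" by blast
  then show ?thesis using that dg_Fract[of p q] by simp
qed

lemma proper_iff_dg: "proper f \<longleftrightarrow> f = 0 \<or> dg f \<le> 0"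
proof
  assume "proper f"
  then show "f = 0 \<or> dg f \<le> 0" unfolding proper_def
  proof (elim disjE exE conjE)
    fix p q assume q: "q \<noteq> 0" "degree p \<le> degree q" "f = Fract p q"
    show ?thesis
    proof (cases "p = 0")
      case True then show ?thesis using q by (simp add: fract_collapse)
    next
      case False then show ?thesis using q dg_Fract[OF False q(1)] by simp
    qed
  qed simp
next
  assume "f = 0 \<or> dg f \<le> 0"
  then show "proper f" unfolding proper_def
  proof
    assume d: "dg f \<le> 0"
    show "f = 0 \<or> (\<exists>p q. q \<noteq> 0 \<and> degree p \<le> degree q \<and> f = Fract p q)"
    proof (cases "f = 0")
      case False
      then obtain p q where "p \<noteq> 0" "q \<noteq> 0" "f = Fract p q" "dg f = int (degree p) - int (degree q)"
        by (rule dg_nonzero_rep)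
      then show ?thesis using d by auto
    qed simp
  qed simp
qed

lemma proper_rep:
  assumes "proper f"
  obtains p q where "q \<noteq> 0" "degree p \<le> degree q" "f = Fract p q"
proof (cases "f = 0")
  case True
  then show ?thesis using that[of 1 0] by (simp add: fract_collapse)
next
  case False
  then show ?thesis using assms that unfolding proper_def by blast
qed

lemma proper_Fract: "q \<noteq> 0 \<Longrightarrow> degree p \<le> degree q \<Longrightarrow> proper (Fract p q)"
  unfolding proper_def by blast

lemma proper_add: assumes "proper f" "proper g" shows "proper (f + g)"
proof -
  obtain a b where ab: "b \<noteq> 0" "degree a \<le> degree b" "f = Fract a b" using proper_rep[OF assms(1)] .
  obtain c d where cd: "d \<noteq> 0" "degree c \<le> degree d" "g = Fract c d" using proper_rep[OF assms(2)] .
  have "f + g = Fract (a * d + c * b) (b * d)" using ab cd by simp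
  moreover have "degree (a * d + c * b) \<le> degree (b * d)"
  proof (rule degree_add_le)
    show "degree (a * d) \<le> degree (b * d)"
      using degree_mult_le[of a d] ab cd by (simp add: degree_mult_eq)
    show "degree (c * b) \<le> degree (b * d)"
      using degree_mult_le[of c b] ab cd by (simp add: degree_mult_eq)
  qed
  ultimately show ?thesis using ab cd by (auto intro!: proper_Fract)
qed

lemma proper_mult: assumes "proper f" "proper g" shows "proper (f * g)"
proof -
  obtain a b where ab: "b \<noteq> 0" "degree a \<le> degree b" "f = Fract a b" using proper_rep[OF assms(1)] .
  obtain c d where cd: "d \<noteq> 0" "degree c \<le> degree d" "g = Fract c d" using proper_rep[OF assms(2)] .
  have "f * g = Fract (a * c) (b * d)" using ab cd by simp
  moreover have "degree (a * c) \<le> degree (b * d)"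
      using degree_mult_le[of a c] ab cd by (simp add: degree_mult_eq)
  ultimately show ?thesis using ab cd by (auto intro!: proper_Fract)
qed

lemma proper_uminus: assumes "proper f" shows "proper (- f)"
proof -
  obtain a b where ab: "b \<noteq> 0" "degree a \<le> degree b" "f = Fract a b" using proper_rep[OF assms(1)] .
  have "- f = Fract (- a) b" using ab by simp
  then show ?thesis using ab by (auto intro!: proper_Fract)
qed

lemma proper_diff: "proper f \<Longrightarrow> proper g \<Longrightarrow> proper (f - g)"
  using proper_add[of f "- g"] proper_uminus[of g] by simp

lemma proper_0[simp]: "proper 0" unfolding proper_def by simp

lemma proper_1[simp]: "proper 1"
  unfolding proper_def by (rule disjI2, rule exI[of _ 1], rule exI[of _ 1]) (simp add: fract_collapse)

lemma proper_const: "proper (to_fract [:c:])"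
  unfolding to_fract_def by (rule proper_Fract) auto

lemma proper_sum: "(\<And>i. i \<in> A \<Longrightarrow> proper (f i)) \<Longrightarrow> proper (sum f A)"
  by (induction A rule: infinite_finite_induct) (auto intro: proper_add)

lemma s_ratf_nz[simp]: "s_ratf \<noteq> 0"
  unfolding s_ratf_def by simp

lemma s_inv[simp]: "s_ratf * inverse s_ratf = 1" "inverse s_ratf * s_ratf = 1"
  by simp_all

lemma proper_inv_s[simp]: "proper (inverse s_ratf)"
proof -
  have "inverse s_ratf = Fract 1 [:0,1:]" unfolding s_ratf_def to_fract_def by simp
  then show ?thesis unfolding proper_def by (intro disjI2 exI[of _ 1] exI[of _ "[:0,1:]"]) simp
qed

lemma proper_s_imp: "proper (s_ratf * f) \<Longrightarrow> proper f"
proof -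
  assume "proper (s_ratf * f)"
  then have "proper (inverse s_ratf * (s_ratf * f))" by (intro proper_mult[OF proper_inv_s])
  then show ?thesis by (simp add: mult.assoc[symmetric])
qed

lemma s_poly_not_proper:
  fixes p :: "'a::field poly"
  assumes "p \<noteq> 0" shows "\<not> proper (s_ratf * to_fract p)"
proof -
  have e: "s_ratf * to_fract p = Fract ([:0,1:] * p) 1" unfolding s_ratf_def to_fract_def by simp
  have "[:0,1:] * p \<noteq> 0" using assms by simp
  then have "dg (s_ratf * to_fract p) = int (degree ([:0,1:] * p))" unfolding e by (subst dg_Fract) auto
  also have "degree ([:0,1:] * p) = degree p + 1" using assms by (subst degree_mult_eq) auto
  finally have "dg (s_ratf * to_fract p) > 0" by simp
  moreover have "s_ratf * to_fract p \<noteq> 0" using assms by simp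
  ultimately show ?thesis unfolding proper_iff_dg by simp
qed

lemma decomp: "\<exists>g h. proper h \<and> (f::'a::field ratf) = to_fract g + inverse s_ratf * h"
proof -
  obtain p q where pq: "f = Fract p q" "q \<noteq> 0" by (cases f) auto
  define g where "g = p div q"
  define r where "r = p mod q"
  define h where "h = Fract ([:0,1:] * r) q"
  have "p = g * q + r" unfolding g_def r_def by simp
  have "inverse s_ratf * h = Fract ([:0,1:] * r) ([:0,1:] * q)"
    unfolding h_def s_ratf_def to_fract_def by simp
  also have "\<dots> = Fract r q" using pq by (simp add: eq_fract)
  finally have 1: "inverse s_ratf * h = Fract r q" .
  have "f = to_fract g + Fract r q" using pq \<open>p = g * q + r\<close>
    by (simp add: to_fract_def eq_fract)
  moreover have "proper h"
  proof (cases "r = 0")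
    case True then show ?thesis unfolding h_def by (simp add: fract_collapse)
  next
    case False
    then have "degree r < degree q" unfolding r_def using pq degree_mod_less by blast
    moreover have "degree ([:0,1:] * r) = degree r + 1" using False by (subst degree_mult_eq) auto
    ultimately show ?thesis unfolding h_def using pq by (intro proper_Fract) auto
  qed
  ultimately have "proper h \<and> f = to_fract g + inverse s_ratf * h" using 1 by simp
  then show ?thesis by blast
qed

lemma decomp_unique:
  assumes "proper h" "proper h'"
    and "to_fract g + inverse s_ratf * h = to_fract g' + inverse s_ratf * h'"
  shows "g = g'"
proof (rule ccontr)
  assume ne: "g \<noteq> g'"
  have "to_fract (g - g') = inverse s_ratf * (h' - h)" using assms(3)
    by (simp add: algebra_simps)
  then have "s_ratf * to_fract (g - g') = h' - h" by (simp add: mult.assoc[symmetric])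
  moreover have "proper (h' - h)" using assms by (intro proper_diff)
  ultimately show False using s_poly_not_proper[of "g - g'"] ne by simp
qed

lemma pi_plus_char:
  assumes "proper h" shows "pi_plus (to_fract g + inverse s_ratf * h) = to_fract g"
proof -
  have "(THE g'. \<exists>h'. proper h' \<and> to_fract g + inverse s_ratf * h = to_fract g' + inverse s_ratf * h') = g"
    apply (rule the_equality)
    using assms apply blast
    using assms by (auto dest: decomp_unique)
  then show ?thesis unfolding pi_plus_def by simp
qed

lemma pi_plus_eq_iff: "pi_plus f = pi_plus f' \<longleftrightarrow> proper (s_ratf * (f - f'))"
proof -
  obtain g h where gh: "proper h" "f = to_fract g + inverse s_ratf * h" using decomp by blast
  obtain g' h' where gh': "proper h'" "f' = to_fract g' + inverse s_ratf * h'" using decomp by blast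
  have pf: "pi_plus f = to_fract g" using pi_plus_char[OF gh(1), of g] gh(2) by simp
  have pf': "pi_plus f' = to_fract g'" using pi_plus_char[OF gh'(1), of g'] gh'(2) by simp
  show ?thesis
  proof
    assume "pi_plus f = pi_plus f'"
    then have "g = g'" using pf pf' by simp
    then have "f - f' = inverse s_ratf * (h - h')" using gh gh'
      by (simp add: algebra_simps)
    then have "s_ratf * (f - f') = h - h'" by (simp add: mult.assoc[symmetric])
    then show "proper (s_ratf * (f - f'))" using proper_diff[OF gh(1) gh'(1)] by simp
  next
    assume k: "proper (s_ratf * (f - f'))"
    define k where "k = s_ratf * (f - f')"
    have "f = f' + inverse s_ratf * k" unfolding k_def by (simp add: mult.assoc[symmetric])
    also have "\<dots> = to_fract g' + inverse s_ratf * (h' + k)" using gh' by (simp add: algebra_simps)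
    moreover have pk: "proper k" using k k_def by simp
    ultimately have "pi_plus f = to_fract g'" using pi_plus_char[OF proper_add[OF gh'(1) pk], of g'] by simp
    then show "pi_plus f = pi_plus f'" using pf' by simp
  qed
qed


lemma dg_mult: assumes "f \<noteq> 0" "g \<noteq> 0" shows "dg (f * g) = dg f + dg g"
proof -
  obtain p q where pq: "p \<noteq> 0" "q \<noteq> 0" "f = Fract p q" "dg f = int (degree p) - int (degree q)"
    using dg_nonzero_rep[OF assms(1)] by blast
  obtain p' q' where pq': "p' \<noteq> 0" "q' \<noteq> 0" "g = Fract p' q'" "dg g = int (degree p') - int (degree q')"
    using dg_nonzero_rep[OF assms(2)] by blast
  have "f * g = Fract (p * p') (q * q')" using pq pq' by simp
  moreover have "dg (Fract (p * p') (q * q')) = int (degree (p * p')) - int (degree (q * q'))"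
    using pq pq' by (intro dg_Fract) auto
  ultimately show ?thesis using pq pq' by (simp add: degree_mult_eq)
qed

lemma dg_inverse: assumes "f \<noteq> 0" shows "dg (inverse f) = - dg f"
proof -
  obtain p q where pq: "p \<noteq> 0" "q \<noteq> 0" "f = Fract p q" "dg f = int (degree p) - int (degree q)"
    using dg_nonzero_rep[OF assms(1)] by blast
  have "inverse f = Fract q p" using pq by simp
  then show ?thesis using pq dg_Fract[of q p] by simp
qed

lemma proper_div_dg:
  assumes "a \<noteq> 0" "b \<noteq> 0" "dg a \<le> dg b" shows "proper (a * inverse b)"
proof -
  have "dg (a * inverse b) = dg a - dg b" using assms by (simp add: dg_mult dg_inverse)
  then show ?thesis unfolding proper_iff_dg using assms by simp
qed

lemma proper_vecI: "(\<And>i. i < dim_vec x \<Longrightarrow> proper (x $ i)) \<Longrightarrow> proper_vec x"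
  unfolding proper_vec_def by auto

lemma proper_matI: "(\<And>i j. i < dim_row A \<Longrightarrow> j < dim_col A \<Longrightarrow> proper (A $$ (i,j))) \<Longrightarrow> proper_mat A"
  unfolding proper_mat_def by auto

lemma proper_scalar_prod:
  assumes "proper_vec v" "proper_vec w" "dim_vec v = dim_vec w"
  shows "proper (v \<bullet> w)"
  unfolding scalar_prod_def using assms unfolding proper_vec_def
  by (intro proper_sum proper_mult) auto

lemma proper_mat_vec:
  assumes "proper_mat A" "proper_vec v" "dim_vec v = dim_col A"
  shows "proper_vec (A *\<^sub>v v)"
proof (rule proper_vecI)
  fix i assume i: "i < dim_vec (A *\<^sub>v v)"
  have "proper_vec (row A i)" using assms i unfolding proper_mat_def proper_vec_def by auto
  then show "proper ((A *\<^sub>v v) $ i)" using i assms by (simp add: proper_scalar_prod)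
qed

lemma proper_mat_mult:
  assumes "proper_mat A" "proper_mat B" "dim_col A = dim_row B"
  shows "proper_mat (A * B)"
proof (rule proper_matI)
  fix i j assume i: "i < dim_row (A * B)" and j: "j < dim_col (A * B)"
  have "proper_vec (row A i)" using assms i unfolding proper_mat_def proper_vec_def by auto
  moreover have "proper_vec (col B j)" using assms j unfolding proper_mat_def proper_vec_def by auto
  ultimately show "proper ((A * B) $$ (i, j))" using i j assms by (simp add: proper_scalar_prod)
qed

definition submat :: "'b mat \<Rightarrow> nat list \<Rightarrow> 'b mat" where
  "submat A xs = mat (length xs) (dim_col A) (\<lambda>(i,j). A $$ (xs!i, j))"

lemma core:
  fixes A :: "'a::field ratf mat"
  assumes A: "A \<in> carrier_mat m n"
    and P: "\<And>v. v \<in> carrier_vec n \<Longrightarrow> proper_vec (A *\<^sub>v v) \<Longrightarrow> proper_vec v"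
    and xs0: "length xs0 = n" "set xs0 \<subseteq> {..<m}" "det (submat A xs0) \<noteq> 0"
  shows "\<exists>N \<in> carrier_mat n m. proper_mat N \<and> N * A = 1\<^sub>m n"
proof -
  define X where "X = {xs. length xs = n \<and> set xs \<subseteq> {..<m} \<and> det (submat A xs) \<noteq> 0}"
  have finX: "finite X"
    by (rule finite_subset[OF _ finite_lists_length_eq[of "{..<m}" n]]) (auto simp: X_def)
  have "xs0 \<in> X" using xs0 unfolding X_def by auto
  define F where "F = (\<lambda>xs. dg (det (submat A xs)))"
  define dmax where "dmax = Max (F ` X)"
  have "dmax \<in> F ` X" unfolding dmax_def using finX \<open>xs0 \<in> X\<close> by (intro Max_in) auto
  then obtain xs where xs: "xs \<in> X" "F xs = dmax" by auto
  have maxi: "\<And>ys. ys \<in> X \<Longrightarrow> F ys \<le> F xs"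
    using xs finX unfolding dmax_def by auto
  define B where "B = submat A xs"
  have Bc: "B \<in> carrier_mat n n" using xs A unfolding B_def submat_def X_def by auto
  have dB: "det B \<noteq> 0" using xs unfolding B_def X_def by auto
  from det_non_zero_imp_unit[OF Bc dB, of "()"]
  obtain Bi where Bi: "Bi \<in> carrier_mat n n" "B * Bi = 1\<^sub>m n" "Bi * B = 1\<^sub>m n"
    unfolding Units_def ring_mat_def by auto
  have AB: "proper ((A * Bi) $$ (k,j))" if k: "k < m" and j: "j < n" for k j
  proof -
    define r where "r = row A k"
    have r: "r \<in> carrier_vec n" using A k unfolding r_def by auto
    define y where "y = transpose_mat Bi *\<^sub>v r"
    have y: "y \<in> carrier_vec n" using Bi r unfolding y_def by auto
    have e1: "(A * Bi) $$ (k,j) = y $ j"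
      using A Bi k j r unfolding y_def r_def
      by (simp add: comm_scalar_prod[of _ n])
    have "transpose_mat B *\<^sub>v y = (transpose_mat B * transpose_mat Bi) *\<^sub>v r"
      unfolding y_def using Bc Bi r by simp
    also have "transpose_mat B * transpose_mat Bi = transpose_mat (Bi * B)"
      by (rule transpose_mult[OF Bi(1) Bc, symmetric])
    also have "\<dots> = 1\<^sub>m n" using Bi by simp
    finally have Cy: "transpose_mat B *\<^sub>v y = r" using r by simp
    define ys where "ys = xs[j := k]"
    have cr: "det (replace_col (transpose_mat B) (transpose_mat B *\<^sub>v y) j) = y $ j * det (transpose_mat B)"
      using Bc y j by (intro cramer_lemma_mat) auto
    have "replace_col (transpose_mat B) (transpose_mat B *\<^sub>v y) j = transpose_mat (submat A ys)"
      unfolding Cy using Bc xs A r j k unfolding replace_col_def B_def submat_def ys_def X_def r_def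
      by (intro eq_matI) (auto simp: nth_list_update)
    then have dy: "det (submat A ys) = y $ j * det B"
      using cr Bc det_transpose[OF Bc] det_transpose[of "submat A ys" n] xs A
      unfolding ys_def submat_def X_def by auto
    show ?thesis
    proof (cases "det (submat A ys) = 0")
      case True
      then have "y $ j = 0" using dy dB by simp
      then show ?thesis using e1 by simp
    next
      case False
      have "set ys \<subseteq> {..<m}" using xs k set_update_subset_insert[of xs j k] unfolding ys_def X_def by auto
      then have "ys \<in> X" using False xs unfolding X_def ys_def by auto
      then have "F ys \<le> F xs" by (rule maxi)
      then have "proper (det (submat A ys) * inverse (det B))"
        using False dB unfolding F_def B_def by (intro proper_div_dg) auto
      moreover have "y $ j = det (submat A ys) * inverse (det B)" using dy dB by simp
      ultimately show ?thesis using e1 by simp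
    qed
  qed
  have Bip: "proper_mat Bi"
  proof (rule proper_matI)
    fix i j assume i: "i < dim_row Bi" and j: "j < dim_col Bi"
    have v: "col Bi j \<in> carrier_vec n" using Bi by auto
    have "proper_vec (A *\<^sub>v col Bi j)"
    proof (rule proper_vecI)
      fix k assume "k < dim_vec (A *\<^sub>v col Bi j)"
      then have k: "k < m" using A by simp
      have "(A *\<^sub>v col Bi j) $ k = (A * Bi) $$ (k,j)" using k j A Bi by simp
      then show "proper ((A *\<^sub>v col Bi j) $ k)" using AB[OF k] j Bi by simp
    qed
    then have "proper_vec (col Bi j)" using P[OF v] by simp
    then show "proper (Bi $$ (i,j))" using i j Bi unfolding proper_vec_def by auto
  qed
  define Sel where "Sel = mat n m (\<lambda>(i,k). if k = xs!i then (1::'a ratf) else 0)"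
  have Selc: "Sel \<in> carrier_mat n m" unfolding Sel_def by simp
  have SelA: "Sel * A = B"
  proof (rule eq_matI)
    fix i j assume i: "i < dim_row B" and j: "j < dim_col B"
    have "xs ! i \<in> set xs" using xs i Bc unfolding X_def by auto
    then have xi: "xs ! i < m" using xs unfolding X_def by auto
    have "(Sel * A) $$ (i,j) = (\<Sum>k = 0..<m. (if k = xs!i then 1 else 0) * A $$ (k,j))"
      using i j Bc A unfolding Sel_def by (simp add: scalar_prod_def)
    also have "\<dots> = (\<Sum>k = 0..<m. (if k = xs!i then A $$ (k,j) else 0))"
      by (intro sum.cong) auto
    also have "\<dots> = A $$ (xs!i, j)" using xi by (simp add: sum.delta')
    also have "\<dots> = B $$ (i,j)" using i j Bc unfolding B_def submat_def by simp
    finally show "(Sel * A) $$ (i,j) = B $$ (i,j)" .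
  qed (use Bc A Selc in auto)
  have Selp: "proper_mat Sel" unfolding Sel_def by (intro proper_matI) auto
  define N where "N = Bi * Sel"
  have "N * A = Bi * B" unfolding N_def using Bi Selc A SelA by simp
  then have "N * A = 1\<^sub>m n" using Bi by simp
  moreover have "N \<in> carrier_mat n m" unfolding N_def using Bi Selc by simp
  moreover have "proper_mat N" unfolding N_def using Bip Selp Bi Selc by (intro proper_mat_mult) auto
  ultimately show ?thesis by blast
qed


interpretation to_fract_hom: comm_ring_hom "to_fract :: 'a::idom \<Rightarrow> 'a fract"
  by unfold_locales auto

lemma ratm_carrier[simp]: "M \<in> carrier_mat m m' \<Longrightarrow> ratm M \<in> carrier_mat m m'"
  by (simp add: ratm_def)

lemma det_ratm: "det (ratm M) = to_fract (det M)"
  unfolding ratm_def by simp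

lemma ratm_inv:
  fixes M :: "'a::field poly mat"
  assumes "M \<in> carrier_mat m m" "det M \<noteq> 0"
  obtains Mi where "Mi \<in> carrier_mat m m" "ratm M * Mi = 1\<^sub>m m" "Mi * ratm M = 1\<^sub>m m"
proof -
  have "det (ratm M) \<noteq> 0" using assms by (simp add: det_ratm)
  from det_non_zero_imp_unit[OF ratm_carrier[OF assms(1)] this, of "()"]
  show ?thesis using that unfolding Units_def ring_mat_def by auto
qed

lemma rho_eq:
  assumes M: "M \<in> carrier_mat m m" and Mi: "Mi \<in> carrier_mat m m" "ratm M * Mi = 1\<^sub>m m" "Mi * ratm M = 1\<^sub>m m"
    and x: "x \<in> carrier_vec m"
  shows "rho M x = ratm M *\<^sub>v map_vec pi_plus (Mi *\<^sub>v x)"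
proof -
  have R: "ratm M \<in> carrier_mat m m" using M by simp
  have "(THE y. y \<in> carrier_vec (dim_col M) \<and> ratm M *\<^sub>v y = x) = Mi *\<^sub>v x"
  proof (rule the_equality)
    have "ratm M *\<^sub>v (Mi *\<^sub>v x) = (ratm M * Mi) *\<^sub>v x" by (rule assoc_mult_mat_vec[OF R Mi(1) x, symmetric])
    then show "Mi *\<^sub>v x \<in> carrier_vec (dim_col M) \<and> ratm M *\<^sub>v (Mi *\<^sub>v x) = x"
      using Mi x M by simp
  next
    fix y assume y: "y \<in> carrier_vec (dim_col M) \<and> ratm M *\<^sub>v y = x"
    then have "y = (Mi * ratm M) *\<^sub>v y" using Mi M by simp
    also have "\<dots> = Mi *\<^sub>v (ratm M *\<^sub>v y)" using y M by (intro assoc_mult_mat_vec[OF Mi(1) R]) simp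
    finally show "y = Mi *\<^sub>v x" using y by simp
  qed
  then show ?thesis unfolding rho_def by simp
qed

lemma rho_eq_iff:
  assumes M: "M \<in> carrier_mat m m" and Mi: "Mi \<in> carrier_mat m m" "ratm M * Mi = 1\<^sub>m m" "Mi * ratm M = 1\<^sub>m m"
    and x: "x \<in> carrier_vec m" and x': "x' \<in> carrier_vec m"
  shows "rho M x = rho M x' \<longleftrightarrow> proper_vec (s_ratf \<cdot>\<^sub>v (Mi *\<^sub>v (x - x')))"
proof -
  have R: "ratm M \<in> carrier_mat m m" using M by simp
  define a where "a = map_vec pi_plus (Mi *\<^sub>v x)"
  define b where "b = map_vec pi_plus (Mi *\<^sub>v x')"
  have a: "a \<in> carrier_vec m" and b: "b \<in> carrier_vec m" using Mi(1) x x' unfolding a_def b_def by auto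
  have "rho M x = rho M x' \<longleftrightarrow> ratm M *\<^sub>v a = ratm M *\<^sub>v b"
    using rho_eq[OF M Mi x] rho_eq[OF M Mi x'] unfolding a_def b_def by simp
  also have "\<dots> \<longleftrightarrow> a = b"
  proof
    assume "ratm M *\<^sub>v a = ratm M *\<^sub>v b"
    then have "Mi *\<^sub>v (ratm M *\<^sub>v a) = Mi *\<^sub>v (ratm M *\<^sub>v b)" by simp
    then have "(Mi * ratm M) *\<^sub>v a = (Mi * ratm M) *\<^sub>v b"
      using assoc_mult_mat_vec[OF Mi(1) R a] assoc_mult_mat_vec[OF Mi(1) R b] by metis
    then show "a = b" using Mi a b by simp
  qed simp
  also have "\<dots> \<longleftrightarrow> (\<forall>i<m. pi_plus ((Mi *\<^sub>v x) $ i) = pi_plus ((Mi *\<^sub>v x') $ i))"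
    unfolding a_def b_def vec_eq_iff using Mi by auto
  also have "\<dots> \<longleftrightarrow> (\<forall>i<m. proper (s_ratf * ((Mi *\<^sub>v x) $ i - (Mi *\<^sub>v x') $ i)))"
    by (simp add: pi_plus_eq_iff)
  also have "\<dots> \<longleftrightarrow> proper_vec (s_ratf \<cdot>\<^sub>v (Mi *\<^sub>v (x - x')))"
  proof -
    have "Mi *\<^sub>v (x - x') = Mi *\<^sub>v x - Mi *\<^sub>v x'" using Mi x x' by (simp add: mult_minus_distrib_mat_vec)
    then show ?thesis unfolding proper_vec_def using Mi by auto
  qed
  finally show ?thesis .
qed

lemma proper_vec_unit: "proper_vec (unit_vec n j)"
  unfolding proper_vec_def unit_vec_def by auto

lemma proper_vec_0: "proper_vec (0\<^sub>v n)"
  unfolding proper_vec_def by auto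

lemma proper_vec_diff: "proper_vec x \<Longrightarrow> proper_vec y \<Longrightarrow> dim_vec y = dim_vec x \<Longrightarrow> proper_vec (x - y)"
  unfolding proper_vec_def by (auto intro: proper_diff)

lemma proper_vec_add: "proper_vec x \<Longrightarrow> proper_vec y \<Longrightarrow> dim_vec y = dim_vec x \<Longrightarrow> proper_vec (x + y)"
  unfolding proper_vec_def by (auto intro: proper_add)

lemma smult_mat_vec: fixes A :: "'b::comm_ring_1 mat" assumes "dim_vec v = dim_col A" shows "(k \<cdot>\<^sub>m A) *\<^sub>v v = k \<cdot>\<^sub>v (A *\<^sub>v v)"
proof (rule eq_vecI)
  fix i assume "i < dim_vec (k \<cdot>\<^sub>v (A *\<^sub>v v))"
  then show "((k \<cdot>\<^sub>m A) *\<^sub>v v) $ i = (k \<cdot>\<^sub>v (A *\<^sub>v v)) $ i"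
    using scalar_prod_smult_left[of "row A i" v k] assms by simp
qed simp

lemma vec_idx: "v \<in> carrier_vec n \<Longrightarrow> vec n (\<lambda>i. v $ i) = v"
  by (rule eq_vecI) auto

lemma st_cancel[simp]: "s_ratf * (inverse s_ratf * x) = x" "inverse s_ratf * (s_ratf * x) = x"
  by (simp_all add: mult.assoc[symmetric])

lemma st_cancel_vec[simp]: "s_ratf \<cdot>\<^sub>v (inverse s_ratf \<cdot>\<^sub>v x) = x" "inverse s_ratf \<cdot>\<^sub>v (s_ratf \<cdot>\<^sub>v x) = x"
  by (rule eq_vecI; simp)+


theorem theorem3p5:
  fixes L :: "'a::field poly mat" and L1 :: "'a poly mat"
    and \<Theta> \<Theta>1 :: "'a ratf mat"
  assumes L: "L \<in> carrier_mat n n" and L_ns: "det L \<noteq> 0"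
    and L1: "L1 \<in> carrier_mat n1 n1" and L1_ns: "det L1 \<noteq> 0"
    and Th: "\<Theta> \<in> carrier_mat n1 n" and Th_p: "proper_mat \<Theta>"
    and Th1: "\<Theta>1 \<in> carrier_mat n1 n" and Th1_p: "proper_mat \<Theta>1"
    and inter: "\<Theta> * ratm L = ratm L1 * \<Theta>1"
  shows "(phi_hom L L1 \<Theta> ` U_mod L = U_mod L1 \<longleftrightarrow>
           (\<exists>C D. C \<in> carrier_mat n n1 \<and> proper_mat C \<and>
                  D \<in> carrier_mat n1 n1 \<and> proper_mat D \<and>
                  \<Theta> * C + inverse s_ratf \<cdot>\<^sub>m (ratm L1 * D) = 1\<^sub>m n1))
       \<and> (inj_on (phi_hom L L1 \<Theta>) (U_mod L) \<longleftrightarrow>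
           (\<exists>C D. C \<in> carrier_mat n n1 \<and> proper_mat C \<and>
                  D \<in> carrier_mat n n \<and> proper_mat D \<and>
                  C * \<Theta>1 + D * (inverse s_ratf \<cdot>\<^sub>m ratm L) = 1\<^sub>m n))"
proof -
  define R where "R = ratm L"
  define R1 where "R1 = ratm L1"
  define t where "t = (inverse s_ratf :: 'a ratf)"
  have R: "R \<in> carrier_mat n n" and R1: "R1 \<in> carrier_mat n1 n1" using L L1 by (auto simp: R_def R1_def)
  obtain Ri where Ri: "Ri \<in> carrier_mat n n" "R * Ri = 1\<^sub>m n" "Ri * R = 1\<^sub>m n"
    using ratm_inv[OF L L_ns] unfolding R_def by blast
  obtain R1i where R1i: "R1i \<in> carrier_mat n1 n1" "R1 * R1i = 1\<^sub>m n1" "R1i * R1 = 1\<^sub>m n1"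
    using ratm_inv[OF L1 L1_ns] unfolding R1_def by blast
  have inter': "\<Theta> * R = R1 * \<Theta>1" using inter unfolding R_def R1_def .
  have c1: "\<Theta>1 * Ri \<in> carrier_mat n1 n" using Th1 Ri by simp
  have key: "R1i * \<Theta> = \<Theta>1 * Ri"
  proof -
    have "R1i * \<Theta> = R1i * (\<Theta> * (R * Ri))" using right_mult_one_mat[OF Th] Ri(2) by simp
    also have "\<dots> = R1i * ((\<Theta> * R) * Ri)" by (simp only: assoc_mult_mat[OF Th R Ri(1)])
    also have "\<dots> = R1i * ((R1 * \<Theta>1) * Ri)" by (simp only: inter')
    also have "\<dots> = (R1i * R1) * (\<Theta>1 * Ri)"
      by (simp only: assoc_mult_mat[OF R1i(1) R1 c1] assoc_mult_mat[OF R1 Th1 Ri(1)])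
    also have "\<dots> = \<Theta>1 * Ri" by (simp only: R1i(3) left_mult_one_mat[OF c1])
    finally show ?thesis .
  qed
  have keyv: "R1i *\<^sub>v (\<Theta> *\<^sub>v y) = \<Theta>1 *\<^sub>v (Ri *\<^sub>v y)" if y: "y \<in> carrier_vec n" for y
  proof -
    have "R1i *\<^sub>v (\<Theta> *\<^sub>v y) = (R1i * \<Theta>) *\<^sub>v y" by (rule assoc_mult_mat_vec[OF R1i(1) Th y, symmetric])
    also have "\<dots> = (\<Theta>1 * Ri) *\<^sub>v y" by (simp only: key)
    also have "\<dots> = \<Theta>1 *\<^sub>v (Ri *\<^sub>v y)" by (rule assoc_mult_mat_vec[OF Th1 Ri(1) y])
    finally show ?thesis .
  qed
  have id2: "s_ratf \<cdot>\<^sub>v (R1i *\<^sub>v (\<Theta> *\<^sub>v x)) = \<Theta>1 *\<^sub>v (s_ratf \<cdot>\<^sub>v (Ri *\<^sub>v x))"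
    if x: "x \<in> carrier_vec n" for x
    using keyv[OF x] mult_mat_vec[OF Th1, of "Ri *\<^sub>v x" s_ratf] Ri x by simp
  have rL: "\<And>x x'. x \<in> carrier_vec n \<Longrightarrow> x' \<in> carrier_vec n \<Longrightarrow>
      rho L x = rho L x' \<longleftrightarrow> proper_vec (s_ratf \<cdot>\<^sub>v (Ri *\<^sub>v (x - x')))"
    using rho_eq_iff[OF L Ri(1) Ri(2)[unfolded R_def] Ri(3)[unfolded R_def]] by blast
  have rL1: "\<And>x x'. x \<in> carrier_vec n1 \<Longrightarrow> x' \<in> carrier_vec n1 \<Longrightarrow>
      rho L1 x = rho L1 x' \<longleftrightarrow> proper_vec (s_ratf \<cdot>\<^sub>v (R1i *\<^sub>v (x - x')))"
    using rho_eq_iff[OF L1 R1i(1) R1i(2)[unfolded R1_def] R1i(3)[unfolded R1_def]] by blast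
  have dTh: "\<Theta> *\<^sub>v x - \<Theta> *\<^sub>v x' = \<Theta> *\<^sub>v (x - x')" if "x \<in> carrier_vec n" "x' \<in> carrier_vec n" for x x'
    using mult_minus_distrib_mat_vec[OF Th that] by simp
  have welldef: "rho L1 (\<Theta> *\<^sub>v x) = rho L1 (\<Theta> *\<^sub>v x')"
    if x: "x \<in> carrier_vec n" and x': "x' \<in> carrier_vec n" and e: "rho L x = rho L x'" for x x'
  proof -
    have d: "x - x' \<in> carrier_vec n" using x x' by simp
    have w: "proper_vec (s_ratf \<cdot>\<^sub>v (Ri *\<^sub>v (x - x')))" using rL[OF x x'] e by simp
    have "proper_vec (\<Theta>1 *\<^sub>v (s_ratf \<cdot>\<^sub>v (Ri *\<^sub>v (x - x'))))"
      using proper_mat_vec[OF Th1_p w] Th1 Ri by simp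
    then have "proper_vec (s_ratf \<cdot>\<^sub>v (R1i *\<^sub>v (\<Theta> *\<^sub>v x - \<Theta> *\<^sub>v x')))"
      using id2[OF d] dTh[OF x x'] by simp
    then show ?thesis using rL1 x x' Th by simp
  qed
  have phi_val: "phi_hom L L1 \<Theta> (rho L x) = rho L1 (\<Theta> *\<^sub>v x)"
    if x: "x \<in> carrier_vec n" "proper_vec x" for x
  proof -
    let ?P = "\<lambda>x'. x' \<in> carrier_vec (dim_row L) \<and> proper_vec x' \<and> rho L x' = rho L x"
    have "?P x" using L x by simp
    then have P: "?P (SOME x'. ?P x')" by (rule someI)
    then have "rho L1 (\<Theta> *\<^sub>v (SOME x'. ?P x')) = rho L1 (\<Theta> *\<^sub>v x)"
      using welldef[of "SOME x'. ?P x'" x] x L by simp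
    then show ?thesis unfolding phi_hom_def by simp
  qed
  have UL: "U_mod L = rho L ` {x \<in> carrier_vec n. proper_vec x}" using L unfolding U_mod_def by simp
  have UL1: "U_mod L1 = rho L1 ` {x \<in> carrier_vec n1. proper_vec x}" using L1 unfolding U_mod_def by simp
  have img: "phi_hom L L1 \<Theta> ` U_mod L = (\<lambda>x. rho L1 (\<Theta> *\<^sub>v x)) ` {x \<in> carrier_vec n. proper_vec x}"
    unfolding UL image_image using phi_val by (intro image_cong) auto
  have img_sub: "(\<lambda>x. rho L1 (\<Theta> *\<^sub>v x)) ` {x \<in> carrier_vec n. proper_vec x} \<subseteq> U_mod L1"
  proof
    fix y assume "y \<in> (\<lambda>x. rho L1 (\<Theta> *\<^sub>v x)) ` {x \<in> carrier_vec n. proper_vec x}"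
    then obtain x where x: "x \<in> carrier_vec n" "proper_vec x" "y = rho L1 (\<Theta> *\<^sub>v x)" by auto
    have "proper_vec (\<Theta> *\<^sub>v x)" using proper_mat_vec[OF Th_p x(2)] x Th by simp
    then show "y \<in> U_mod L1" unfolding UL1 using x Th by auto
  qed
  have part1: "phi_hom L L1 \<Theta> ` U_mod L = U_mod L1 \<longleftrightarrow>
           (\<exists>C D. C \<in> carrier_mat n n1 \<and> proper_mat C \<and>
                  D \<in> carrier_mat n1 n1 \<and> proper_mat D \<and>
                  \<Theta> * C + inverse s_ratf \<cdot>\<^sub>m (ratm L1 * D) = 1\<^sub>m n1)"
  proof
    assume eq: "phi_hom L L1 \<Theta> ` U_mod L = U_mod L1"
    have ex: "\<forall>j. \<exists>x. j < n1 \<longrightarrow> x \<in> carrier_vec n \<and> proper_vec x \<and> rho L1 (unit_vec n1 j) = rho L1 (\<Theta> *\<^sub>v x)"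
    proof (intro allI)
      fix j
      show "\<exists>x. j < n1 \<longrightarrow> x \<in> carrier_vec n \<and> proper_vec x \<and> rho L1 (unit_vec n1 j) = rho L1 (\<Theta> *\<^sub>v x)"
      proof (cases "j < n1")
        case True
        have "rho L1 (unit_vec n1 j) \<in> U_mod L1" unfolding UL1 using proper_vec_unit[of n1 j] by (intro imageI) auto
        then show ?thesis using eq unfolding img by auto
      qed simp
    qed
    from choice[OF ex] obtain X where
      X: "\<And>j. j < n1 \<Longrightarrow> X j \<in> carrier_vec n \<and> proper_vec (X j) \<and> rho L1 (unit_vec n1 j) = rho L1 (\<Theta> *\<^sub>v X j)"
      by blast
    define Z where "Z j = s_ratf \<cdot>\<^sub>v (R1i *\<^sub>v (unit_vec n1 j - \<Theta> *\<^sub>v X j))" for j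
    have Zc: "Z j \<in> carrier_vec n1" for j
    proof -
      have "dim_row R1i = n1" using R1i(1) by simp
      then show ?thesis unfolding Z_def carrier_vec_def by simp
    qed
    have Zp: "proper_vec (Z j)" if j: "j < n1" for j
    proof -
      have e: "rho L1 (unit_vec n1 j) = rho L1 (\<Theta> *\<^sub>v X j)" using X[OF j] by blast
      have c: "unit_vec n1 j \<in> carrier_vec n1" "\<Theta> *\<^sub>v X j \<in> carrier_vec n1"
        using X[OF j] Th by auto
      show ?thesis using rL1[OF c] e unfolding Z_def by blast
    qed
    have ZX: "\<Theta> *\<^sub>v X j + t \<cdot>\<^sub>v (R1 *\<^sub>v Z j) = unit_vec n1 j" if j: "j < n1" for j
    proof -
      define d where "d = unit_vec n1 j - \<Theta> *\<^sub>v X j"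
      have d: "d \<in> carrier_vec n1" unfolding d_def using Th X[OF j] by simp
      have "R1 *\<^sub>v Z j = s_ratf \<cdot>\<^sub>v (R1 *\<^sub>v (R1i *\<^sub>v d))"
        unfolding Z_def d_def[symmetric] using mult_mat_vec[OF R1, of "R1i *\<^sub>v d"] R1i d by simp
      also have "R1 *\<^sub>v (R1i *\<^sub>v d) = (R1 * R1i) *\<^sub>v d" by (rule assoc_mult_mat_vec[OF R1 R1i(1) d, symmetric])
      also have "\<dots> = d" using R1i(2) d by simp
      finally have "t \<cdot>\<^sub>v (R1 *\<^sub>v Z j) = d" unfolding t_def by simp
      then show ?thesis unfolding d_def using Th X[OF j] by (intro eq_vecI) auto
    qed
    define C where "C = mat n n1 (\<lambda>(i,j). X j $ i)"
    define D where "D = mat n1 n1 (\<lambda>(i,j). Z j $ i)"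
    have Cc: "C \<in> carrier_mat n n1" and Dc: "D \<in> carrier_mat n1 n1" unfolding C_def D_def by auto
    have Cp: "proper_mat C"
    proof (rule proper_matI)
      fix i j assume i: "i < dim_row C" and j: "j < dim_col C"
      then have i': "i < n" and j': "j < n1" unfolding C_def by auto
      have "X j \<in> carrier_vec n" "proper_vec (X j)" using X[OF j'] by auto
      then show "proper (C $$ (i,j))" using i' j' unfolding C_def proper_vec_def by simp
    qed
    have Dp: "proper_mat D"
    proof (rule proper_matI)
      fix i j assume i: "i < dim_row D" and j: "j < dim_col D"
      then have i': "i < n1" and j': "j < n1" unfolding D_def by auto
      have "Z j \<in> carrier_vec n1" "proper_vec (Z j)" using Zc Zp[OF j'] by auto
      then show "proper (D $$ (i,j))" using i' j' unfolding D_def proper_vec_def by simp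
    qed
    have "\<Theta> * C + t \<cdot>\<^sub>m (R1 * D) = 1\<^sub>m n1"
    proof (rule eq_matI)
      fix i j assume i: "i < dim_row (1\<^sub>m n1 :: 'a ratf mat)" and j: "j < dim_col (1\<^sub>m n1 :: 'a ratf mat)"
      have Xj: "X j \<in> carrier_vec n" using X j by simp
      have Zj: "Z j \<in> carrier_vec n1" using Zc by simp
      have "(\<Theta> * C) $$ (i,j) = (\<Theta> *\<^sub>v X j) $ i"
        using i j Th Xj unfolding C_def by (simp add: vec_idx)
      moreover have "(R1 * D) $$ (i,j) = (R1 *\<^sub>v Z j) $ i"
        using i j R1 Zj unfolding D_def by (simp add: vec_idx)
      ultimately have "(\<Theta> * C + t \<cdot>\<^sub>m (R1 * D)) $$ (i,j) = (\<Theta> *\<^sub>v X j + t \<cdot>\<^sub>v (R1 *\<^sub>v Z j)) $ i"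
        using i j Th R1 Cc Dc by simp
      also have "\<dots> = unit_vec n1 j $ i" using ZX j by simp
      finally show "(\<Theta> * C + t \<cdot>\<^sub>m (R1 * D)) $$ (i,j) = 1\<^sub>m n1 $$ (i,j)" using i j by simp
    qed (use Th R1 Cc Dc in auto)
    then show "\<exists>C D. C \<in> carrier_mat n n1 \<and> proper_mat C \<and>
                  D \<in> carrier_mat n1 n1 \<and> proper_mat D \<and>
                  \<Theta> * C + inverse s_ratf \<cdot>\<^sub>m (ratm L1 * D) = 1\<^sub>m n1"
      using Cc Dc Cp Dp unfolding t_def R1_def by blast
  next
    assume "\<exists>C D. C \<in> carrier_mat n n1 \<and> proper_mat C \<and>
                  D \<in> carrier_mat n1 n1 \<and> proper_mat D \<and>
                  \<Theta> * C + inverse s_ratf \<cdot>\<^sub>m (ratm L1 * D) = 1\<^sub>m n1"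
    then obtain C D where Cc: "C \<in> carrier_mat n n1" and Cp: "proper_mat C" and
      Dc: "D \<in> carrier_mat n1 n1" and Dp: "proper_mat D" and CD: "\<Theta> * C + t \<cdot>\<^sub>m (R1 * D) = 1\<^sub>m n1"
      unfolding t_def R1_def by blast
    define E where "E = t \<cdot>\<^sub>m (R1 * D)"
    have Ec: "E \<in> carrier_mat n1 n1" unfolding E_def using R1 Dc by simp
    have "U_mod L1 \<subseteq> (\<lambda>x. rho L1 (\<Theta> *\<^sub>v x)) ` {x \<in> carrier_vec n. proper_vec x}"
    proof
      fix y assume "y \<in> U_mod L1"
      then obtain w where w: "w \<in> carrier_vec n1" "proper_vec w" "y = rho L1 w" unfolding UL1 by auto
      define x where "x = C *\<^sub>v w"
      have x: "x \<in> carrier_vec n" "proper_vec x" unfolding x_def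
        using Cc w proper_mat_vec[OF Cp w(2)] by auto
      have "(\<Theta> * C + E) *\<^sub>v w = w" using CD w unfolding E_def by simp
      moreover have "(\<Theta> * C + E) *\<^sub>v w = \<Theta> *\<^sub>v x + E *\<^sub>v w"
        using add_mult_distrib_mat_vec[of "\<Theta> * C" n1 n1 E w] Th Cc Ec w unfolding x_def by simp
      ultimately have sumeq: "\<Theta> *\<^sub>v x + E *\<^sub>v w = w" by simp
      have diff: "w - \<Theta> *\<^sub>v x = E *\<^sub>v w"
      proof (rule eq_vecI)
        fix i assume i: "i < dim_vec (E *\<^sub>v w)"
        have "(\<Theta> *\<^sub>v x + E *\<^sub>v w) $ i = w $ i" using sumeq by simp
        then show "(w - \<Theta> *\<^sub>v x) $ i = (E *\<^sub>v w) $ i" using i Ec Th w by (simp add: algebra_simps)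
      qed (use Ec w Th in simp)
      have "R1i * E = t \<cdot>\<^sub>m (R1i * (R1 * D))" unfolding E_def
        using mult_smult_distrib[OF R1i(1), of "R1 * D" n1] R1 Dc by simp
      also have "R1i * (R1 * D) = (R1i * R1) * D" by (rule assoc_mult_mat[OF R1i(1) R1 Dc, symmetric])
      also have "\<dots> = D" using R1i(3) Dc by simp
      finally have RE: "R1i * E = t \<cdot>\<^sub>m D" .
      have "R1i *\<^sub>v (w - \<Theta> *\<^sub>v x) = (R1i * E) *\<^sub>v w" unfolding diff
        by (rule assoc_mult_mat_vec[OF R1i(1) Ec w(1), symmetric])
      also have "\<dots> = t \<cdot>\<^sub>v (D *\<^sub>v w)" unfolding RE using smult_mat_vec[of w D t] Dc w by simp
      finally have "s_ratf \<cdot>\<^sub>v (R1i *\<^sub>v (w - \<Theta> *\<^sub>v x)) = D *\<^sub>v w" unfolding t_def by simp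
      moreover have "proper_vec (D *\<^sub>v w)" using proper_mat_vec[OF Dp w(2)] Dc w by simp
      ultimately have "rho L1 w = rho L1 (\<Theta> *\<^sub>v x)" using rL1[of w "\<Theta> *\<^sub>v x"] w Th x by simp
      then show "y \<in> (\<lambda>x. rho L1 (\<Theta> *\<^sub>v x)) ` {x \<in> carrier_vec n. proper_vec x}"
        using w x by auto
    qed
    then show "phi_hom L L1 \<Theta> ` U_mod L = U_mod L1" unfolding img using img_sub by blast
  qed
  define Q where "Q \<longleftrightarrow> (\<forall>x\<in>carrier_vec n. proper_vec x \<longrightarrow>
      proper_vec (s_ratf \<cdot>\<^sub>v (R1i *\<^sub>v (\<Theta> *\<^sub>v x))) \<longrightarrow> proper_vec (s_ratf \<cdot>\<^sub>v (Ri *\<^sub>v x)))"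
  have inj_Q: "inj_on (phi_hom L L1 \<Theta>) (U_mod L) \<longleftrightarrow> Q"
  proof
    assume inj: "inj_on (phi_hom L L1 \<Theta>) (U_mod L)"
    show Q unfolding Q_def
    proof (intro ballI impI)
      fix x assume x: "x \<in> carrier_vec n" "proper_vec x"
        and h: "proper_vec (s_ratf \<cdot>\<^sub>v (R1i *\<^sub>v (\<Theta> *\<^sub>v x)))"
      have z: "0\<^sub>v n \<in> carrier_vec n" "proper_vec (0\<^sub>v n)" using proper_vec_0 by auto
      have Th0: "\<Theta> *\<^sub>v 0\<^sub>v n = 0\<^sub>v n1" by (rule eq_vecI) (use Th in auto)
      have "\<Theta> *\<^sub>v x - \<Theta> *\<^sub>v 0\<^sub>v n = \<Theta> *\<^sub>v x" unfolding Th0 using Th x by simp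
      then have "rho L1 (\<Theta> *\<^sub>v x) = rho L1 (\<Theta> *\<^sub>v 0\<^sub>v n)"
        using rL1[of "\<Theta> *\<^sub>v x" "\<Theta> *\<^sub>v 0\<^sub>v n"] h Th x by simp
      then have "phi_hom L L1 \<Theta> (rho L x) = phi_hom L L1 \<Theta> (rho L (0\<^sub>v n))"
        using phi_val[OF x] phi_val[OF z] by simp
      moreover have "rho L x \<in> U_mod L" "rho L (0\<^sub>v n) \<in> U_mod L" unfolding UL using x z by auto
      ultimately have "rho L x = rho L (0\<^sub>v n)" using inj by (auto dest: inj_onD)
      then show "proper_vec (s_ratf \<cdot>\<^sub>v (Ri *\<^sub>v x))" using rL[OF x(1) z(1)] x by simp
    qed
  next
    assume Q
    show "inj_on (phi_hom L L1 \<Theta>) (U_mod L)"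
    proof (rule inj_onI)
      fix u u' assume "u \<in> U_mod L" "u' \<in> U_mod L" and e: "phi_hom L L1 \<Theta> u = phi_hom L L1 \<Theta> u'"
      then obtain x x' where x: "x \<in> carrier_vec n" "proper_vec x" "u = rho L x"
        and x': "x' \<in> carrier_vec n" "proper_vec x'" "u' = rho L x'" unfolding UL by auto
      have "rho L1 (\<Theta> *\<^sub>v x) = rho L1 (\<Theta> *\<^sub>v x')" using e phi_val[OF x(1,2)] phi_val[OF x'(1,2)] x x' by simp
      then have "proper_vec (s_ratf \<cdot>\<^sub>v (R1i *\<^sub>v (\<Theta> *\<^sub>v x - \<Theta> *\<^sub>v x')))" using rL1 Th x x' by simp
      then have h: "proper_vec (s_ratf \<cdot>\<^sub>v (R1i *\<^sub>v (\<Theta> *\<^sub>v (x - x'))))" using dTh[OF x(1) x'(1)] by simp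
      have "x - x' \<in> carrier_vec n" "proper_vec (x - x')" using x x' proper_vec_diff[of x x'] by auto
      then have "proper_vec (s_ratf \<cdot>\<^sub>v (Ri *\<^sub>v (x - x')))" using \<open>Q\<close> h unfolding Q_def by blast
      then show "u = u'" using rL[OF x(1) x'(1)] x x' by simp
    qed
  qed
  define tR where "tR = t \<cdot>\<^sub>m R"
  have tRc: "tR \<in> carrier_mat n n" unfolding tR_def using R by simp
  have id1: "s_ratf \<cdot>\<^sub>v (Ri *\<^sub>v (tR *\<^sub>v v)) = v" if v: "v \<in> carrier_vec n" for v
  proof -
    have "tR *\<^sub>v v = t \<cdot>\<^sub>v (R *\<^sub>v v)" unfolding tR_def using smult_mat_vec[of v R t] R v by simp
    then have "Ri *\<^sub>v (tR *\<^sub>v v) = t \<cdot>\<^sub>v (Ri *\<^sub>v (R *\<^sub>v v))" using mult_mat_vec[OF Ri(1), of "R *\<^sub>v v" t] R v by simp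
    also have "Ri *\<^sub>v (R *\<^sub>v v) = (Ri * R) *\<^sub>v v" by (rule assoc_mult_mat_vec[OF Ri(1) R v, symmetric])
    also have "\<dots> = v" using Ri(3) v by simp
    finally show ?thesis unfolding t_def by simp
  qed
  have id3: "tR *\<^sub>v (s_ratf \<cdot>\<^sub>v (Ri *\<^sub>v x)) = x" if x: "x \<in> carrier_vec n" for x
  proof -
    have "tR *\<^sub>v (s_ratf \<cdot>\<^sub>v (Ri *\<^sub>v x)) = t \<cdot>\<^sub>v (R *\<^sub>v (s_ratf \<cdot>\<^sub>v (Ri *\<^sub>v x)))"
      unfolding tR_def using smult_mat_vec[of "s_ratf \<cdot>\<^sub>v (Ri *\<^sub>v x)" R t] R Ri x by simp
    also have "R *\<^sub>v (s_ratf \<cdot>\<^sub>v (Ri *\<^sub>v x)) = s_ratf \<cdot>\<^sub>v (R *\<^sub>v (Ri *\<^sub>v x))"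
      using mult_mat_vec[OF R, of "Ri *\<^sub>v x" s_ratf] Ri x by simp
    also have "R *\<^sub>v (Ri *\<^sub>v x) = (R * Ri) *\<^sub>v x" by (rule assoc_mult_mat_vec[OF R Ri(1) x, symmetric])
    also have "\<dots> = x" using Ri(2) x by simp
    finally show ?thesis unfolding t_def by simp
  qed
  define PV where "PV \<longleftrightarrow> (\<forall>v\<in>carrier_vec n. proper_vec (\<Theta>1 *\<^sub>v v) \<longrightarrow> proper_vec (tR *\<^sub>v v) \<longrightarrow> proper_vec v)"
  have Q_PV: "Q \<longleftrightarrow> PV"
  proof
    assume Q
    show PV unfolding PV_def
    proof (intro ballI impI)
      fix v assume v: "v \<in> carrier_vec n" and h1: "proper_vec (\<Theta>1 *\<^sub>v v)" and h2: "proper_vec (tR *\<^sub>v v)"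
      define x where "x = tR *\<^sub>v v"
      have x: "x \<in> carrier_vec n" unfolding x_def using tRc v by simp
      have "s_ratf \<cdot>\<^sub>v (R1i *\<^sub>v (\<Theta> *\<^sub>v x)) = \<Theta>1 *\<^sub>v v" using id2[OF x] id1[OF v] unfolding x_def by simp
      then have "proper_vec (s_ratf \<cdot>\<^sub>v (Ri *\<^sub>v x))" using \<open>Q\<close> x h1 h2 unfolding Q_def x_def by auto
      then show "proper_vec v" using id1[OF v] unfolding x_def by simp
    qed
  next
    assume PV
    show Q unfolding Q_def
    proof (intro ballI impI)
      fix x assume x: "x \<in> carrier_vec n" "proper_vec x"
        and h: "proper_vec (s_ratf \<cdot>\<^sub>v (R1i *\<^sub>v (\<Theta> *\<^sub>v x)))"
      define v where "v = s_ratf \<cdot>\<^sub>v (Ri *\<^sub>v x)"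
      have v: "v \<in> carrier_vec n" unfolding v_def using Ri x by simp
      have "proper_vec (\<Theta>1 *\<^sub>v v)" using h id2[OF x(1)] unfolding v_def by simp
      moreover have "proper_vec (tR *\<^sub>v v)" using id3[OF x(1)] x unfolding v_def by simp
      ultimately show "proper_vec (s_ratf \<cdot>\<^sub>v (Ri *\<^sub>v x))" using \<open>PV\<close> v unfolding PV_def v_def by blast
    qed
  qed
  have PV_CD: "PV \<longleftrightarrow> (\<exists>C D. C \<in> carrier_mat n n1 \<and> proper_mat C \<and>
                  D \<in> carrier_mat n n \<and> proper_mat D \<and>
                  C * \<Theta>1 + D * tR = 1\<^sub>m n)"
  proof
    assume "\<exists>C D. C \<in> carrier_mat n n1 \<and> proper_mat C \<and>
                  D \<in> carrier_mat n n \<and> proper_mat D \<and> C * \<Theta>1 + D * tR = 1\<^sub>m n"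
    then obtain C D where Cc: "C \<in> carrier_mat n n1" and Cp: "proper_mat C" and
      Dc: "D \<in> carrier_mat n n" and Dp: "proper_mat D" and CD: "C * \<Theta>1 + D * tR = 1\<^sub>m n" by blast
    show PV unfolding PV_def
    proof (intro ballI impI)
      fix v assume v: "v \<in> carrier_vec n" and h1: "proper_vec (\<Theta>1 *\<^sub>v v)" and h2: "proper_vec (tR *\<^sub>v v)"
      have "v = (C * \<Theta>1 + D * tR) *\<^sub>v v" using CD v by simp
      also have "\<dots> = (C * \<Theta>1) *\<^sub>v v + (D * tR) *\<^sub>v v"
        using add_mult_distrib_mat_vec[of "C * \<Theta>1" n n "D * tR" v] Cc Th1 Dc tRc v by simp
      also have "\<dots> = C *\<^sub>v (\<Theta>1 *\<^sub>v v) + D *\<^sub>v (tR *\<^sub>v v)"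
        using assoc_mult_mat_vec[OF Cc Th1 v] assoc_mult_mat_vec[OF Dc tRc v] by simp
      finally have ve: "v = C *\<^sub>v (\<Theta>1 *\<^sub>v v) + D *\<^sub>v (tR *\<^sub>v v)" .
      have "proper_vec (C *\<^sub>v (\<Theta>1 *\<^sub>v v))" using proper_mat_vec[OF Cp h1] Cc Th1 by simp
      moreover have "proper_vec (D *\<^sub>v (tR *\<^sub>v v))" using proper_mat_vec[OF Dp h2] Dc tRc by simp
      ultimately show "proper_vec v" using ve proper_vec_add Cc Dc by (metis dim_mult_mat_vec carrier_matD(1))
    qed
  next
    assume PV
    define A where "A = mat (n1+n) n (\<lambda>(i,j). if i < n1 then \<Theta>1 $$ (i,j) else tR $$ (i - n1, j))"
    have Ac: "A \<in> carrier_mat (n1+n) n" unfolding A_def by simp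
    have rowA1: "row A i = row \<Theta>1 i" if "i < n1" for i
      by (rule eq_vecI) (use Th1 that in \<open>auto simp: A_def\<close>)
    have rowA2: "row A (n1+i) = row tR i" if "i < n" for i
      by (rule eq_vecI) (use tRc that in \<open>auto simp: A_def\<close>)
    have PA: "proper_vec v" if v: "v \<in> carrier_vec n" and h: "proper_vec (A *\<^sub>v v)" for v
    proof -
      have "proper_vec (\<Theta>1 *\<^sub>v v)"
      proof (rule proper_vecI)
        fix i assume "i < dim_vec (\<Theta>1 *\<^sub>v v)"
        then have i: "i < n1" using Th1 by simp
        have "(\<Theta>1 *\<^sub>v v) $ i = (A *\<^sub>v v) $ i" using i rowA1[OF i] Th1 Ac by simp
        then show "proper ((\<Theta>1 *\<^sub>v v) $ i)" using h i Ac unfolding proper_vec_def by auto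
      qed
      moreover have "proper_vec (tR *\<^sub>v v)"
      proof (rule proper_vecI)
        fix i assume "i < dim_vec (tR *\<^sub>v v)"
        then have i: "i < n" using tRc by simp
        have "(tR *\<^sub>v v) $ i = (A *\<^sub>v v) $ (n1+i)" using i rowA2[OF i] tRc Ac by simp
        then show "proper ((tR *\<^sub>v v) $ i)" using h i Ac unfolding proper_vec_def by auto
      qed
      ultimately show ?thesis using \<open>PV\<close> v unfolding PV_def by blast
    qed
    have sub: "submat A [n1..<n1+n] = tR"
      by (rule eq_matI) (use tRc Ac in \<open>auto simp: submat_def A_def\<close>)
    have "det R = to_fract (det L)" unfolding R_def by (rule det_ratm)
    then have "det tR \<noteq> 0" unfolding tR_def t_def using L_ns R by simp
    then have "det (submat A [n1..<n1+n]) \<noteq> 0" unfolding sub .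
    then obtain N where Nc: "N \<in> carrier_mat n (n1+n)" and Np: "proper_mat N" and NA: "N * A = 1\<^sub>m n"
    proof -
      have "set [n1..<n1+n] \<subseteq> {..<n1+n}" by auto
      moreover have "length [n1..<n1+n] = n" by simp
      ultimately show ?thesis using core[OF Ac PA, of "[n1..<n1+n]"] \<open>det (submat A [n1..<n1+n]) \<noteq> 0\<close> that
        by blast
    qed
    define C where "C = mat n n1 (\<lambda>(i,j). N $$ (i,j))"
    define D where "D = mat n n (\<lambda>(i,j). N $$ (i, n1+j))"
    have Cc: "C \<in> carrier_mat n n1" and Dc: "D \<in> carrier_mat n n" unfolding C_def D_def by auto
    have Cp: "proper_mat C" using Np Nc unfolding C_def proper_mat_def by auto
    have Dp: "proper_mat D" using Np Nc unfolding D_def proper_mat_def by auto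
    have "C * \<Theta>1 + D * tR = N * A"
    proof (rule eq_matI)
      fix i j assume i: "i < dim_row (N * A)" and j: "j < dim_col (N * A)"
      have i': "i < n" and j': "j < n" using i j Nc Ac by auto
      define f where "f k = N $$ (i,k) * A $$ (k,j)" for k
      have "(N * A) $$ (i,j) = (\<Sum>k = 0..<n1+n. f k)"
        using i' j' Nc Ac unfolding f_def by (simp add: scalar_prod_def)
      also have "\<dots> = (\<Sum>k = 0..<n1. f k) + (\<Sum>k = n1..<n1+n. f k)"
        by (rule sum.atLeastLessThan_concat[symmetric]) auto
      also have "(\<Sum>k = n1..<n1+n. f k) = (\<Sum>k = 0..<n. f (k + n1))"
        using sum.shift_bounds_nat_ivl[of f 0 n1 n] by (simp add: add.commute)
      also have "(\<Sum>k = 0..<n1. f k) = (C * \<Theta>1) $$ (i,j)"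
        using i' j' Cc Th1 unfolding f_def C_def A_def by (auto simp: scalar_prod_def intro: sum.cong)
      also have "(\<Sum>k = 0..<n. f (k + n1)) = (D * tR) $$ (i,j)"
        using i' j' Dc tRc unfolding f_def D_def A_def by (auto simp: scalar_prod_def ac_simps intro: sum.cong)
      finally show "(C * \<Theta>1 + D * tR) $$ (i,j) = (N * A) $$ (i,j)"
        using i' j' Cc Th1 Dc tRc by simp
    qed (use Cc Th1 Dc tRc Nc Ac in auto)
    then show "\<exists>C D. C \<in> carrier_mat n n1 \<and> proper_mat C \<and>
                  D \<in> carrier_mat n n \<and> proper_mat D \<and> C * \<Theta>1 + D * tR = 1\<^sub>m n"
      using NA Cc Dc Cp Dp by auto
  qed
  have part2: "inj_on (phi_hom L L1 \<Theta>) (U_mod L) \<longleftrightarrow>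
           (\<exists>C D. C \<in> carrier_mat n n1 \<and> proper_mat C \<and>
                  D \<in> carrier_mat n n \<and> proper_mat D \<and>
                  C * \<Theta>1 + D * (inverse s_ratf \<cdot>\<^sub>m ratm L) = 1\<^sub>m n)"
    using inj_Q Q_PV PV_CD unfolding tR_def t_def R_def by simp
  show ?thesis using part1 part2 by simp
qed


end
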